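(* Let $A\in\mathbb{R}^{n\times n}$ be a singular positive semi-definite matrix with $\mathrm{rank}(A)=d<n$, and let $u_0\notin\mathrm{range}(A)$. Then for any $\lambda_0>0$, $u_0^\intercal(\lambda_0u_0u_0^\intercal+A)^\dagger u_0=1/\lambda_0$.
   Context: $A^\dagger$ is the Moore–Penrose pseudo-inverse; $\mathrm{range}(A)$ is the column space of $A$. *)

theory Defs
  imports "HOL-Analysis.Analysis"
begin

definition psd_matrix :: "real^'n^'n \<Rightarrow> bool" where
  "psd_matrix A \<longleftrightarrow> transpose A = A \<and> (\<forall>x. 0 \<le> x \<bullet> (A *v x))"

definition outer_prod :: "real^'n \<Rightarrow> real^'m \<Rightarrow> real^'m^'n" where
  "outer_prod u v = (\<chi> i j. u $ i * v $ j)"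

definition pinv :: "real^'n^'m \<Rightarrow> real^'m^'n" where
  "pinv A = (THE X. A ** X ** A = A \<and> X ** A ** X = X \<and>
                    transpose (A ** X) = A ** X \<and> transpose (X ** A) = X ** A)"

end

theory Submission
  imports Defs
begin

lemma sym_dot:
  fixes M :: "real^'n^'n"
  assumes "transpose M = M"
  shows "(M *v x) \<bullet> y = x \<bullet> (M *v y)"
  by (metis assms dot_lmul_matrix inner_commute transpose_matrix_vector)

lemma sym_orth_ker:
  fixes M :: "real^'n^'n"
  assumes "transpose M = M" and "\<And>w. z \<bullet> (M *v w) = 0"
  shows "M *v z = 0"
proof -
  have "(M *v z) \<bullet> (M *v z) = 0" using assms sym_dot by metis
  then show ?thesis by simp
qed

lemma pinv_unique:
  fixes A X Y :: "real^'n^'n"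
  assumes X: "A ** X ** A = A" "X ** A ** X = X" "transpose (A ** X) = A ** X" "transpose (X ** A) = X ** A"
  and Y: "A ** Y ** A = A" "Y ** A ** Y = Y" "transpose (A ** Y) = A ** Y" "transpose (Y ** A) = Y ** A"
  shows "X = Y"
proof -
  have "X = X ** (A ** X)" using X(2) by (simp add: matrix_mul_assoc)
  also have "\<dots> = X ** transpose (A ** X)" using X(3) by simp
  also have "\<dots> = X ** transpose X ** transpose A" by (simp add: matrix_transpose_mul matrix_mul_assoc)
  also have "\<dots> = X ** transpose X ** transpose (A ** Y ** A)" using Y(1) by simp
  also have "\<dots> = X ** (transpose (A ** X) ** transpose (A ** Y))"
    by (simp add: matrix_transpose_mul matrix_mul_assoc)
  also have "\<dots> = X ** (A ** X) ** (A ** Y)" using X(3) Y(3) by (simp add: matrix_mul_assoc)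
  also have "\<dots> = X ** A ** Y" using X(2) by (simp add: matrix_mul_assoc)
  finally have 1: "X = X ** A ** Y" .
  have "Y = (Y ** A) ** Y" using Y(2) by (simp add: matrix_mul_assoc)
  also have "\<dots> = transpose (Y ** A) ** Y" using Y(4) by simp
  also have "\<dots> = transpose A ** transpose Y ** Y" by (simp add: matrix_transpose_mul)
  also have "\<dots> = transpose (A ** X ** A) ** transpose Y ** Y" using X(1) by simp
  also have "\<dots> = (transpose (X ** A) ** transpose (Y ** A)) ** Y"
    by (simp add: matrix_transpose_mul matrix_mul_assoc)
  also have "\<dots> = (X ** A) ** (Y ** A) ** Y" using X(4) Y(4) by (simp add: matrix_mul_assoc)
  also have "\<dots> = X ** A ** Y" using Y(2) by (metis matrix_mul_assoc)
  finally show ?thesis using 1 by simp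
qed

lemma pinv_exists:
  fixes M :: "real^'n^'n"
  assumes sym: "transpose M = M"
  shows "\<exists>X. M ** X ** M = M \<and> X ** M ** X = X \<and> transpose (M ** X) = M ** X \<and> transpose (X ** M) = X ** M"
proof -
  define S where "S = range ((*v) M)"
  have subS: "subspace S" unfolding S_def
    by (simp add: linear_subspace_image)
  obtain B where B: "B \<subseteq> S" "pairwise orthogonal B" "\<And>x. x \<in> B \<Longrightarrow> norm x = 1"
     "independent B" "span B = S"
    using orthonormal_basis_subspace[OF subS] by metis
  have bb: "b \<bullet> b = 1" if "b \<in> B" for b using B(3)[OF that] by (simp add: dot_square_norm)
  define p where "p x = (\<Sum>b\<in>B. (b \<bullet> x) *\<^sub>R b)" for x
  have p_eq: "p x = (\<Sum>b\<in>B. (b \<bullet> x / (b \<bullet> b)) *\<^sub>R b)" for x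
    unfolding p_def by (intro sum.cong) (auto simp: bb)
  have lin_p: "linear p" unfolding p_def
    by (rule linearI) (simp_all add: inner_add_right scaleR_add_left sum.distrib scaleR_sum_right)
  have orth: "orthogonal y (x - p x)" if "y \<in> S" for x y
    unfolding p_eq using Gram_Schmidt_step[OF B(2), of y x] B(5) that by simp
  have pS: "p x \<in> S" for x
  proof -
    have "p x \<in> span B" unfolding p_def by (intro span_sum span_scale span_base)
    then show ?thesis using B(5) by simp
  qed
  have p_id: "p y = y" if "y \<in> S" for y
  proof -
    have "y - p y \<in> S" using that pS subS by (simp add: subspace_diff)
    then have "orthogonal (y - p y) (y - p y)" using orth[of "y - p y" y] by simp
    then show ?thesis by (simp add: orthogonal_self)
  qed
  have MS: "M *v x \<in> S" for x unfolding S_def by simp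
  have Mp: "M *v (p x) = M *v x" for x
  proof -
    have "M *v (x - p x) = 0"
      by (rule sym_orth_ker[OF sym]) (metis orth MS orthogonal_def inner_commute)
    then show ?thesis by (simp add: matrix_vector_mult_diff_distrib)
  qed
  have inj: "inj_on ((*v) M) (span S)"
  proof -
    have "\<forall>x\<in>span S. M *v x = 0 \<longrightarrow> x = 0"
    proof (intro ballI impI)
      fix x assume x: "x \<in> span S" "M *v x = 0"
      then have "x \<in> S" using subS by (metis span_eq_iff)
      then obtain w where w: "x = M *v w" unfolding S_def by auto
      have "x \<bullet> x = w \<bullet> (M *v x)" using w sym_dot[OF sym] by metis
      then show "x = 0" using x by simp
    qed
    then show ?thesis by (simp add: linear_inj_on_iff_eq_0 subspace_span)
  qed
  obtain g where g: "linear g" "\<forall>x\<in>span S. g (M *v x) = x"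
    using linear_inj_on_left_inverse[OF _ inj] by auto
  have gS: "g (M *v y) = y" if "y \<in> S" for y using g(2) that subS by (metis span_eq_iff)
  have Mg: "M *v g y = y" if yS: "y \<in> S" for y
  proof -
    obtain w where w: "y = M *v w" using yS unfolding S_def by auto
    then have "y = M *v p w" by (simp add: Mp)
    then show ?thesis using gS[OF pS] by simp
  qed
  define G where "G = matrix g"
  define P where "P = matrix p"
  have Gv: "G *v x = g x" for x unfolding G_def using g(1) by simp
  have Pv: "P *v x = p x" for x unfolding P_def using lin_p by simp
  have Psym: "transpose P = P"
  proof -
    have "transpose P *v x = P *v x" for x
    proof -
      have "(transpose P *v x) \<bullet> y = (P *v x) \<bullet> y" for y
      proof -
        have "(transpose P *v x) \<bullet> y = x \<bullet> p y" by (simp add: dot_lmul_matrix Pv)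
        also have "\<dots> = (\<Sum>b\<in>B. (b \<bullet> y) * (x \<bullet> b))" unfolding p_def by (simp add: inner_sum_right)
        also have "\<dots> = (\<Sum>b\<in>B. (b \<bullet> x) * (b \<bullet> y))" by (simp add: inner_commute mult.commute)
        also have "\<dots> = p x \<bullet> y" unfolding p_def by (simp add: inner_sum_left)
        finally show ?thesis by (simp add: Pv)
      qed
      then show ?thesis by (metis vector_eq_rdot)
    qed
    then show ?thesis by (simp add: matrix_eq)
  qed
  define X where "X = G ** P"
  have Xv: "X *v x = g (p x)" for x unfolding X_def by (simp add: matrix_vector_mul_assoc[symmetric] Gv Pv)
  have c1: "M ** X ** M = M"
    unfolding matrix_eq by (simp add: matrix_vector_mul_assoc[symmetric] Xv p_id MS Mg)
  have c2: "X ** M ** X = X"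
    unfolding matrix_eq by (simp add: matrix_vector_mul_assoc[symmetric] Xv p_id MS Mg pS)
  have c3: "M ** X = P"
    unfolding matrix_eq by (simp add: matrix_vector_mul_assoc[symmetric] Xv Mg pS Pv)
  have c4: "X ** M = P"
  proof -
    have "g (p (M *v x)) = p x" for x
      using p_id[OF MS, of x] Mp[of x] gS[OF pS, of x] by simp
    then show ?thesis unfolding matrix_eq by (simp add: matrix_vector_mul_assoc[symmetric] Xv Pv)
  qed
  show ?thesis using c1 c2 c3 c4 Psym by (intro exI[of _ X]) simp
qed

lemma pinv_props:
  fixes M :: "real^'n^'n"
  assumes sym: "transpose M = M"
  shows "M ** pinv M ** M = M"
proof -
  obtain X where X: "M ** X ** M = M" "X ** M ** X = X" "transpose (M ** X) = M ** X" "transpose (X ** M) = X ** M"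
    using pinv_exists[OF sym] by blast
  have "pinv M = X" unfolding pinv_def
  proof (rule the_equality)
    show "M ** X ** M = M \<and> X ** M ** X = X \<and> transpose (M ** X) = M ** X \<and> transpose (X ** M) = X ** M"
      using X by blast
    fix Y assume "M ** Y ** M = M \<and> Y ** M ** Y = Y \<and> transpose (M ** Y) = M ** Y \<and> transpose (Y ** M) = Y ** M"
    then show "Y = X" using pinv_unique[of M Y X] X by blast
  qed
  then show ?thesis using X by simp
qed

theorem lemma10:
  fixes A :: "real^'n^'n" and u0 :: "real^'n" and d :: nat and lam0 :: real
  assumes "psd_matrix A"
    and "rank A = d" and "d < CARD('n)"
    and "u0 \<notin> range ((*v) A)"
    and "lam0 > 0"
  shows "u0 \<bullet> (pinv (lam0 *\<^sub>R outer_prod u0 u0 + A) *v u0) = 1 / lam0"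
proof -
  have symA: "transpose A = A" using assms(1) unfolding psd_matrix_def by blast
  define M where "M = lam0 *\<^sub>R outer_prod u0 u0 + A"
  have Mv: "M *v x = (lam0 * (u0 \<bullet> x)) *\<^sub>R u0 + A *v x" for x
    unfolding M_def outer_prod_def
    by (simp add: vec_eq_iff matrix_vector_mult_def inner_vec_def sum_distrib_left sum.distrib algebra_simps)
  have symM: "transpose M = M"
    unfolding M_def outer_prod_def using symA
    by (simp add: vec_eq_iff transpose_def mult.commute)
  define S where "S = range ((*v) A)"
  obtain y w where yw: "y \<in> span S" "\<And>v. v \<in> span S \<Longrightarrow> orthogonal w v" "u0 = y + w"
    using orthogonal_subspace_decomp_exists[of S u0] by metis
  have subS: "subspace S" unfolding S_def by (simp add: linear_subspace_image)
  have yS: "y \<in> S" using yw(1) subS by (metis span_eq_iff)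
  have Aw: "A *v w = 0"
    by (rule sym_orth_ker[OF symA]) (metis yw(2) span_base S_def rangeI orthogonal_def)
  have w0: "w \<noteq> 0" using yS yw(3) assms(4) unfolding S_def by auto
  have uw: "u0 \<bullet> w = w \<bullet> w"
    using yw(2)[OF yw(1)] yw(3) by (simp add: inner_add_left inner_add_right orthogonal_def inner_commute)
  have uw0: "u0 \<bullet> w \<noteq> 0" using uw w0 by simp
  define z where "z = (1 / (lam0 * (u0 \<bullet> w))) *\<^sub>R w"
  have Mz: "M *v z = u0"
    using uw0 assms(5) by (simp add: z_def Mv Aw matrix_vector_mult_scaleR inner_scaleR_right)
  have uz: "u0 \<bullet> z = 1 / lam0"
    using uw0 assms(5) by (simp add: z_def inner_scaleR_right)
  have "u0 \<bullet> (pinv M *v u0) = (M *v z) \<bullet> (pinv M *v (M *v z))" using Mz by simp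
  also have "\<dots> = z \<bullet> (M *v (pinv M *v (M *v z)))" using sym_dot[OF symM] by metis
  also have "\<dots> = z \<bullet> (M *v z)"
    using pinv_props[OF symM] by (simp add: matrix_vector_mul_assoc matrix_mul_assoc)
  also have "\<dots> = 1 / lam0" using Mz uz by (simp add: inner_commute)
  finally show ?thesis unfolding M_def .
qed

end
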